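(* Let $A,B$ be $2\times 2$ constant Hermitian positive definite matrices. Then $H_{A,B}$ has an eigenfunction of the form $\Phi(x)=(\tilde a\,\phi^\alpha_n(x),\ \tilde b\,\phi^\beta_m(x))^{t}$ with $\tilde a,\tilde b\in\mathbb{C}$ not both zero, $\alpha,\beta>0$ and $m,n\in\{0,1,2,\dots\}$, if and only if $AB=BA$. In particular, when $AB\neq BA$, no nonzero function of the form $v_0\phi^\alpha_0+v_1\phi_1^\alpha$ ($v_0,v_1\in\mathbb{C}^2$, $\alpha>0$) is an eigenfunction of $H_{A,B}$.
   Context: $H_{A,B}:=B(-\partial_x^2)+Ax^2$ on $L^2(\mathbb{R};\mathbb{C}^2)$, self-adjoint on the domain of pairs of functions in $H^2(\mathbb{R})\cap\{f:\int|x^2f|^2<\infty\}$. For $\alpha>0$, $n\ge0$: $\phi^\alpha_n(x)=\alpha^{1/4}h_n(\alpha^{1/2}x)e^{-\alpha x^2/2}/\sqrt{2^nn!\sqrt\pi}$, with $h_n(x)=(-1)^ne^{x^2}\partial_x^n[e^{-x^2}]$ the Hermite polynomials; these are the normalized eigenfunctions of $-\partial_x^2+\alpha^2x^2$. *)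

theory Defs
  imports "HOL-Analysis.Analysis"
begin

definition hermitian_mat :: "complex^2^2 \<Rightarrow> bool" where
  "hermitian_mat A \<longleftrightarrow> (\<forall>i j. A $ i $ j = cnj (A $ j $ i))"

definition quad_form :: "complex^2^2 \<Rightarrow> complex^2 \<Rightarrow> complex" where
  "quad_form A v = (\<Sum>i\<in>UNIV. cnj (v $ i) * (A *v v) $ i)"

definition pos_def_mat :: "complex^2^2 \<Rightarrow> bool" where
  "pos_def_mat A \<longleftrightarrow> hermitian_mat A \<and> (\<forall>v. v \<noteq> 0 \<longrightarrow> 0 < Re (quad_form A v))"

definition hermite :: "nat \<Rightarrow> real \<Rightarrow> real" where
  "hermite n x = (-1) ^ n * exp (x^2) * (deriv ^^ n) (\<lambda>t. exp (- (t^2))) x"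

text \<open>Normalized eigenfunctions of -d^2/dx^2 + alpha^2 x^2.\<close>
definition hermite_fn :: "real \<Rightarrow> nat \<Rightarrow> real \<Rightarrow> real" where
  "hermite_fn \<alpha> n x = \<alpha> powr (1/4) * hermite n (sqrt \<alpha> * x) * exp (- \<alpha> * x^2 / 2)
      / sqrt (2 ^ n * fact n * sqrt pi)"

definition H_op :: "complex^2^2 \<Rightarrow> complex^2^2 \<Rightarrow> (real \<Rightarrow> complex^2) \<Rightarrow> real \<Rightarrow> complex^2" where
  "H_op A B \<Phi> x = B *v (- vector_derivative (\<lambda>t. vector_derivative \<Phi> (at t)) (at x))
                    + complex_of_real (x^2) *s (A *v \<Phi> x)"

definition eigenfunction_H :: "complex^2^2 \<Rightarrow> complex^2^2 \<Rightarrow> (real \<Rightarrow> complex^2) \<Rightarrow> bool" where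
  "eigenfunction_H A B \<Phi> \<longleftrightarrow>
     \<Phi> \<noteq> (\<lambda>x. 0) \<and>
     (\<forall>x. \<Phi> differentiable (at x)) \<and>
     (\<forall>x. (\<lambda>t. vector_derivative \<Phi> (at t)) differentiable (at x)) \<and>
     (\<exists>\<mu>::complex. \<forall>x. H_op A B \<Phi> x = \<mu> *s \<Phi> x)"

end

theory Submission
  imports Defs "HOL-Computational_Algebra.Polynomial" "HOL-Computational_Algebra.Fundamental_Theorem_Algebra" "HOL-Real_Asymp.Real_Asymp"
begin


fun hp :: "nat \<Rightarrow> real poly" where
  "hp 0 = 1"
| hp_Suc: "hp (Suc n) = [:0,2:] * hp n - pderiv (hp n)"

declare hp.simps(2)[simp del]

lemma hp_pderiv: "pderiv (hp (Suc n)) = smult (2 * real (Suc n)) (hp n)"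
proof (induction n)
  case 0
  then show ?case by (simp add: pderiv_pCons hp_Suc)
next
  case (Suc n)
  have "pderiv (hp (Suc (Suc n))) = pderiv ([:0,2:] * hp (Suc n)) - pderiv (pderiv (hp (Suc n)))"
    by (simp add: pderiv_diff hp_Suc)
  also have "\<dots> = smult 2 (hp (Suc n)) + [:0,2:] * smult (2 * real (Suc n)) (hp n)
      - smult (2 * real (Suc n)) (pderiv (hp n))"
    by (simp add: pderiv_mult pderiv_pCons Suc pderiv_smult algebra_simps pderiv_diff)
  also have "\<dots> = smult 2 (hp (Suc n)) + smult (2 * real (Suc n)) (hp (Suc n))"
    by (simp add: algebra_simps hp_Suc smult_diff_right)
  also have "\<dots> = smult (2 * real (Suc (Suc n))) (hp (Suc n))"
    by (simp add: algebra_simps smult_add_left[symmetric])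
  finally show ?case .
qed

lemma hp_ode: "pderiv (pderiv (hp n)) = [:0,2:] * pderiv (hp n) - smult (2 * real n) (hp n)"
proof -
  have "pderiv (hp (Suc n)) = smult 2 (hp n) + [:0,2:] * pderiv (hp n) - pderiv (pderiv (hp n))"
    by (simp add: pderiv_diff pderiv_mult pderiv_pCons hp_Suc pderiv_smult)
  then have "smult (2 * real (Suc n)) (hp n) = smult 2 (hp n) + [:0,2:] * pderiv (hp n) - pderiv (pderiv (hp n))"
    by (simp add: hp_pderiv)
  then show ?thesis by (simp add: algebra_simps smult_add_left)
qed

lemma hp_deg: "degree (hp n) = n \<and> hp n \<noteq> 0"
proof (induction n)
  case 0
  then show ?case by simp
next
  case (Suc n)
  have d1: "degree ([:0,2:] * hp n) = Suc n"
    using Suc by (subst degree_mult_eq) auto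
  have d2: "degree (pderiv (hp n)) < Suc n" using Suc by (simp add: degree_pderiv)
  have "degree (hp (Suc n)) = Suc n"
    using degree_add_eq_left[of "- pderiv (hp n)" "[:0,2:] * hp n"] d1 d2 by (simp add: hp_Suc)
  then show ?case by auto
qed

lemma deriv_gauss_iter:
  "(deriv ^^ n) (\<lambda>t. exp (- (t^2))) = (\<lambda>t. (-1)^n * poly (hp n) t * exp (- (t^2)))"
proof (induction n)
  case 0
  then show ?case by simp
next
  case (Suc n)
  have "((\<lambda>t. (-1)^n * poly (hp n) t * exp (- (t^2))) has_real_derivative
          (-1)^Suc n * poly (hp (Suc n)) t * exp (- (t^2))) (at t)" for t
    apply (rule derivative_eq_intros poly_DERIV refl | simp)+
    apply (simp add: algebra_simps hp_Suc)
    done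
  then have "deriv (\<lambda>t. (-1)^n * poly (hp n) t * exp (- (t^2))) = (\<lambda>t. (-1)^Suc n * poly (hp (Suc n)) t * exp (- (t^2)))"
    by (intro ext DERIV_imp_deriv)
  then show ?case using Suc by simp
qed

lemma hermite_poly: "hermite n x = poly (hp n) x"
proof -
  have "exp (x^2) * exp (-(x^2)) = 1" by (simp add: exp_minus_inverse)
  then show ?thesis
    by (simp add: hermite_def deriv_gauss_iter algebra_simps flip: power_mult_distrib)
qed
    
definition hK :: "real \<Rightarrow> nat \<Rightarrow> real" where
  "hK \<alpha> n = \<alpha> powr (1/4) / sqrt (2 ^ n * fact n * sqrt pi)"

lemma hK_pos: "\<alpha> > 0 \<Longrightarrow> hK \<alpha> n > 0"
  by (simp add: hK_def)

lemma hermite_fn_eq: "hermite_fn \<alpha> n x = hK \<alpha> n * poly (hp n) (sqrt \<alpha> * x) * exp (- \<alpha> * x^2 / 2)"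
  by (simp add: hermite_fn_def hK_def hermite_poly)

lemma dpoly_s: "((\<lambda>x. poly p (s * x)) has_real_derivative poly (pderiv p) (s * x) * s) (at x)"
  by (rule DERIV_chain2[OF poly_DERIV]) (auto intro!: derivative_eq_intros)

lemma dgauss: "((\<lambda>x. exp (- \<alpha> * x^2 / 2)) has_real_derivative exp (- \<alpha> * x^2 / 2) * (- \<alpha> * x)) (at x)"
  by (auto intro!: derivative_eq_intros)

definition hf1 :: "real \<Rightarrow> nat \<Rightarrow> real \<Rightarrow> real" where
  "hf1 \<alpha> n x = hK \<alpha> n * (sqrt \<alpha> * poly (pderiv (hp n)) (sqrt \<alpha> * x) - \<alpha> * x * poly (hp n) (sqrt \<alpha> * x))
     * exp (- \<alpha> * x^2 / 2)"

lemma hf_deriv1: "(hermite_fn \<alpha> n has_real_derivative hf1 \<alpha> n x) (at x)"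
proof -
  have "((\<lambda>x. hK \<alpha> n * poly (hp n) (sqrt \<alpha> * x) * exp (- \<alpha> * x^2 / 2)) has_real_derivative hf1 \<alpha> n x) (at x)"
    unfolding hf1_def
    by (rule DERIV_cong[OF DERIV_mult[OF DERIV_cmult[OF dpoly_s[of "hp n" "sqrt \<alpha>"], of "hK \<alpha> n"] dgauss[of \<alpha>]]])
      (simp add: algebra_simps)
  then show ?thesis by (simp add: hermite_fn_eq[abs_def])
qed

lemma alg2: fixes s a x K P P1 P2 E m :: real
  assumes "a = s * s" "P2 = 2 * (s * x) * P1 - 2 * m * P"
  shows "K * (s * (P2 * s) - (a * P + P1 * s * (a * x))) * E + E * (- a * x) * (K * (s * P1 - a * x * P))
     = (a^2 * x^2 - (2 * m + 1) * a) * (K * P * E)"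
  unfolding assms by (simp add: algebra_simps power2_eq_square)

lemma hf_deriv2: assumes "\<alpha> > 0"
  shows "(hf1 \<alpha> n has_real_derivative (\<alpha>^2 * x^2 - (2 * real n + 1) * \<alpha>) * hermite_fn \<alpha> n x) (at x)"
proof -
  let ?s = "sqrt \<alpha>"
  let ?P = "poly (hp n) (?s * x)"
  let ?P1 = "poly (pderiv (hp n)) (?s * x)"
  let ?P2 = "poly (pderiv (pderiv (hp n))) (?s * x)"
  let ?E = "exp (- \<alpha> * x^2 / 2)"
  have ss: "?s * ?s = \<alpha>" using assms by simp
  have ode: "?P2 = 2 * (?s * x) * ?P1 - 2 * real n * ?P"
    by (simp add: hp_ode)
  note D = DERIV_mult[OF DERIV_cmult[OF DERIV_diff[OF DERIV_cmult[OF dpoly_s[of "pderiv (hp n)" ?s]] 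
      DERIV_mult[OF DERIV_cmult_Id dpoly_s[of "hp n" ?s]]], of "hK \<alpha> n"] dgauss[of \<alpha>]]
  show ?thesis
    unfolding hf1_def[abs_def]
    apply (rule DERIV_cong[OF D])
    unfolding hermite_fn_eq mult.assoc[symmetric]
    by (rule alg2[OF ss[symmetric] ode, unfolded mult.assoc[symmetric]])
qed

lemma vd_comb:
  fixes u v :: "complex^2"
  assumes "(f has_real_derivative f') (at x)" "(g has_real_derivative g') (at x)"
  shows "((\<lambda>x. f x *\<^sub>R u + g x *\<^sub>R v) has_vector_derivative (f' *\<^sub>R u + g' *\<^sub>R v)) (at x)"
  using has_vector_derivative_add[OF has_vector_derivative_scaleR[OF assms(1) has_vector_derivative_const]
     has_vector_derivative_scaleR[OF assms(2) has_vector_derivative_const]] by simp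

lemma HOP:
  fixes u v :: "complex^2" and f f1 f2 g g1 g2 :: "real \<Rightarrow> real"
  assumes "\<And>x. (f has_real_derivative f1 x) (at x)" "\<And>x. (f1 has_real_derivative f2 x) (at x)"
    "\<And>x. (g has_real_derivative g1 x) (at x)" "\<And>x. (g1 has_real_derivative g2 x) (at x)"
  shows "(\<forall>x. (\<lambda>x. f x *\<^sub>R u + g x *\<^sub>R v) differentiable (at x))"
    "(\<forall>x. (\<lambda>t. vector_derivative (\<lambda>x. f x *\<^sub>R u + g x *\<^sub>R v) (at t)) differentiable (at x))"
    "H_op A B (\<lambda>x. f x *\<^sub>R u + g x *\<^sub>R v) x = B *v (- (f2 x *\<^sub>R u + g2 x *\<^sub>R v))
       + complex_of_real (x^2) *s (A *v (f x *\<^sub>R u + g x *\<^sub>R v))"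
proof -
  have V1: "vector_derivative (\<lambda>x. f x *\<^sub>R u + g x *\<^sub>R v) (at t) = f1 t *\<^sub>R u + g1 t *\<^sub>R v" for t
    by (rule vector_derivative_at[OF vd_comb[OF assms(1,3)]])
  then have V1': "(\<lambda>t. vector_derivative (\<lambda>x. f x *\<^sub>R u + g x *\<^sub>R v) (at t)) = (\<lambda>t. f1 t *\<^sub>R u + g1 t *\<^sub>R v)"
    by auto
  show "(\<forall>x. (\<lambda>x. f x *\<^sub>R u + g x *\<^sub>R v) differentiable (at x))"
    using differentiableI_vector[OF vd_comb[OF assms(1,3)]] by blast
  show "(\<forall>x. (\<lambda>t. vector_derivative (\<lambda>x. f x *\<^sub>R u + g x *\<^sub>R v) (at t)) differentiable (at x))"
    unfolding V1' using differentiableI_vector[OF vd_comb[OF assms(2,4)]] by blast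
  show "H_op A B (\<lambda>x. f x *\<^sub>R u + g x *\<^sub>R v) x = B *v (- (f2 x *\<^sub>R u + g2 x *\<^sub>R v))
       + complex_of_real (x^2) *s (A *v (f x *\<^sub>R u + g x *\<^sub>R v))"
    unfolding H_op_def V1' vector_derivative_at[OF vd_comb[OF assms(2,4)]] ..
qed



lemma mv2: fixes M :: "complex^2^2" and w :: "complex^2" shows "(M *v w) $ i = M$i$1 * w$1 + M$i$2 * w$2"
  by (simp add: matrix_vector_mult_def sum_2)

lemma mm2: fixes A B :: "complex^2^2" shows "(A ** B) $ i $ j = A$i$1 * B$1$j + A$i$2 * B$2$j"
  by (simp add: matrix_matrix_mult_def sum_2)

lemma mat2_eq: "(M :: 'a^2^2) = N \<longleftrightarrow> M$1$1 = N$1$1 \<and> M$1$2 = N$1$2 \<and> M$2$1 = N$2$1 \<and> M$2$2 = N$2$2"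
  by (auto simp: vec_eq_iff forall_2)

lemma vec2_eq: "(v :: 'a^2) = w \<longleftrightarrow> v$1 = w$1 \<and> v$2 = w$2"
  by (auto simp: vec_eq_iff forall_2)

lemma herm: assumes "hermitian_mat A"
  shows "cnj (A$1$1) = A$1$1" "cnj (A$2$2) = A$2$2" "A$2$1 = cnj (A$1$2)"
  using assms unfolding hermitian_mat_def by (metis complex_cnj_cnj)+

lemma KL:
  fixes p q r s t v w1 w2 :: complex
  assumes rp: "cnj p = p" and rr: "cnj r = r" and rs: "cnj s = s" and rv: "cnj v = v"
    and e1: "p * w1 + q * w2 = 0" and e2: "cnj q * w1 + r * w2 = 0"
    and e3: "s * w1 + t * w2 = 0" and e4: "cnj t * w1 + v * w2 = 0"
    and nz: "w1 \<noteq> 0 \<or> w2 \<noteq> 0"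
  shows "q * cnj t = t * cnj q \<and> p * t + q * v = s * q + t * r"
proof (cases "w1 = 0")
  case True
  then have "w2 \<noteq> 0" using nz by auto
  then have "q = 0" "r = 0" "t = 0" "v = 0" using e1 e2 e3 e4 True by auto
  then show ?thesis by simp
next
  case w1: False
  show ?thesis
  proof (cases "w2 = 0")
    case True
    then have "p = 0" "cnj q = 0" "s = 0" "cnj t = 0" using e1 e2 e3 e4 w1 by auto
    then show ?thesis by simp
  next
    case w2: False
    have q: "q = - p * w1 / w2" using e1 w2 by (simp add: field_simps add_eq_0_iff)
    have t: "t = - s * w1 / w2" using e3 w2 by (simp add: field_simps add_eq_0_iff)
    have cq: "cnj q = - p * cnj w1 / cnj w2" using q rp by simp
    have ct: "cnj t = - s * cnj w1 / cnj w2" using t rs by simp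
    have r: "r = - cnj q * w1 / w2" using e2 w2 by (simp add: field_simps add_eq_0_iff)
    have v: "v = - cnj t * w1 / w2" using e4 w2 by (simp add: field_simps add_eq_0_iff)
    have cw2: "cnj w2 \<noteq> 0" using w2 by simp
    show ?thesis
      unfolding r v ct cq using w2 cw2 unfolding q t
      by (simp add: field_simps)
  qed
qed

lemma CE:
  fixes A B :: "complex^2^2" and w1 w2 \<kappa> :: complex and c :: real
  assumes hA: "hermitian_mat A" and hB: "hermitian_mat B"
    and nz: "w1 \<noteq> 0 \<or> w2 \<noteq> 0"
    and b1: "B$1$1 * w1 + B$1$2 * w2 = \<kappa> * w1" and b2: "B$2$1 * w1 + B$2$2 * w2 = \<kappa> * w2"
    and a1: "A$1$1 * w1 + A$1$2 * w2 = c * (B$1$1 * w1 + B$1$2 * w2)"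
    and a2: "A$2$1 * w1 + A$2$2 * w2 = c * (B$2$1 * w1 + B$2$2 * w2)"
  shows "A ** B = B ** A"
proof -
  note hA' = herm[OF hA] and hB' = herm[OF hB]
  define S where "S = cnj w1 * w1 + cnj w2 * w2"
  have cS: "cnj S = S" unfolding S_def by simp
  have S0: "S \<noteq> 0"
  proof
    assume "S = 0"
    then have "Re S = 0" by simp
    moreover have "Re S = (cmod w1)^2 + (cmod w2)^2"
      unfolding S_def by (simp add: complex_mult_cnj cmod_def power2_eq_square)
    ultimately show False using nz by (simp add: add_nonneg_eq_0_iff)
  qed
  define L where "L = cnj w1 * (B$1$1 * w1 + B$1$2 * w2) + cnj w2 * (B$2$1 * w1 + B$2$2 * w2)"
  have cL: "cnj L = L" unfolding L_def using hB' by (simp add: algebra_simps)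
  have L: "L = \<kappa> * S" unfolding L_def S_def b1 b2 by (simp add: algebra_simps)
  have ck: "cnj \<kappa> = \<kappa>"
  proof -
    have "cnj \<kappa> * S = \<kappa> * S" using cL cS L by (metis complex_cnj_mult)
    then show ?thesis using S0 by simp
  qed
  define p where "p = A$1$1 - c * B$1$1"
  define q where "q = A$1$2 - c * B$1$2"
  define r where "r = A$2$2 - c * B$2$2"
  define s where "s = B$1$1 - \<kappa>"
  define t where "t = B$1$2"
  define v where "v = B$2$2 - \<kappa>"
  have K: "q * cnj t = t * cnj q \<and> p * t + q * v = s * q + t * r"
  proof (rule KL)
    show "cnj p = p" "cnj r = r" "cnj s = s" "cnj v = v"
      unfolding p_def r_def s_def v_def using hA' hB' ck by simp_all
    show "p * w1 + q * w2 = 0" using a1 unfolding p_def q_def by (simp add: algebra_simps)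
    show "cnj q * w1 + r * w2 = 0" using a2 hA' hB' unfolding q_def r_def by (simp add: algebra_simps)
    show "s * w1 + t * w2 = 0" using b1 unfolding s_def t_def by (simp add: algebra_simps)
    show "cnj t * w1 + v * w2 = 0" using b2 hB' unfolding t_def v_def by (simp add: algebra_simps)
    show "w1 \<noteq> 0 \<or> w2 \<noteq> 0" by fact
  qed
  have K2: "p * cnj t + cnj q * v = s * cnj q + cnj t * r"
  proof -
    have "cnj (p * t + q * v) = cnj (s * q + t * r)" using K by simp
    moreover have "cnj p = p" "cnj r = r" "cnj s = s" "cnj v = v"
      unfolding p_def r_def s_def v_def using hA' hB' ck by simp_all
    ultimately show ?thesis by simp
  qed
  have A11: "A$1$1 = p + c * B$1$1" and A12: "A$1$2 = q + c * t" and A22: "A$2$2 = r + c * B$2$2"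
    and A21: "A$2$1 = cnj q + c * cnj t" and B21: "B$2$1 = cnj t" and B12: "B$1$2 = t"
    and B11: "B$1$1 = s + \<kappa>" and B22: "B$2$2 = v + \<kappa>"
    unfolding p_def q_def r_def s_def t_def v_def using hA' hB' by simp_all
  show ?thesis
    unfolding mat2_eq mm2 A11 A12 A22 A21 B21 B12 B11 B22
    using K K2 by (simp add: algebra_simps) (metis mult.commute)?
qed

lemma EVreal:
  fixes B :: "complex^2^2" and w1 w2 \<kappa> :: complex
  assumes hB: "hermitian_mat B"
    and nz: "w1 \<noteq> 0 \<or> w2 \<noteq> 0"
    and b1: "B$1$1 * w1 + B$1$2 * w2 = \<kappa> * w1" and b2: "B$2$1 * w1 + B$2$2 * w2 = \<kappa> * w2"
  shows "cnj \<kappa> = \<kappa>" "Re (cnj w1 * w1 + cnj w2 * w2) > 0"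
    "cnj w1 * (B$1$1 * w1 + B$1$2 * w2) + cnj w2 * (B$2$1 * w1 + B$2$2 * w2) = \<kappa> * (cnj w1 * w1 + cnj w2 * w2)"
proof -
  note hB' = herm[OF hB]
  define S where "S = cnj w1 * w1 + cnj w2 * w2"
  have cS: "cnj S = S" unfolding S_def by simp
  have ReS: "Re S = (cmod w1)^2 + (cmod w2)^2"
      unfolding S_def by (simp add: complex_mult_cnj cmod_def power2_eq_square)
  moreover have "(cmod w1)^2 + (cmod w2)^2 > 0"
  proof (cases "w1 = 0")
    case True
    then show ?thesis using nz by simp
  next
    case False
    then show ?thesis by (simp add: add_pos_nonneg)
  qed
  ultimately show "Re (cnj w1 * w1 + cnj w2 * w2) > 0" unfolding S_def by simp
  then have S0: "S \<noteq> 0" unfolding S_def by (metis less_irrefl zero_complex.sel(1))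
  define L where "L = cnj w1 * (B$1$1 * w1 + B$1$2 * w2) + cnj w2 * (B$2$1 * w1 + B$2$2 * w2)"
  have cL: "cnj L = L" unfolding L_def using hB' by (simp add: algebra_simps)
  have L: "L = \<kappa> * S" unfolding L_def S_def b1 b2 by (simp add: algebra_simps)
  then show "cnj w1 * (B$1$1 * w1 + B$1$2 * w2) + cnj w2 * (B$2$1 * w1 + B$2$2 * w2) = \<kappa> * (cnj w1 * w1 + cnj w2 * w2)"
    unfolding L_def S_def .
  have "cnj \<kappa> * S = \<kappa> * S" using cL cS L by (metis complex_cnj_mult)
  then show "cnj \<kappa> = \<kappa>" using S0 by simp
qed

lemma EVpos:
  fixes B :: "complex^2^2" and w1 w2 \<kappa> :: complex
  assumes pB: "pos_def_mat B"
    and nz: "w1 \<noteq> 0 \<or> w2 \<noteq> 0"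
    and b1: "B$1$1 * w1 + B$1$2 * w2 = \<kappa> * w1" and b2: "B$2$1 * w1 + B$2$2 * w2 = \<kappa> * w2"
  shows "\<kappa> = complex_of_real (Re \<kappa>) \<and> Re \<kappa> > 0"
proof -
  have hB: "hermitian_mat B" using pB unfolding pos_def_mat_def by simp
  note E = EVreal[OF hB nz b1 b2]
  have "vector [w1, w2] \<noteq> (0::complex^2)" using nz by (auto simp: vec2_eq)
  then have "0 < Re (quad_form B (vector [w1, w2]))" using pB unfolding pos_def_mat_def by blast
  also have "quad_form B (vector [w1, w2]) = \<kappa> * (cnj w1 * w1 + cnj w2 * w2)"
    unfolding quad_form_def sum_2 mv2 vector_2 E(3) ..
  finally have pos: "0 < Re (\<kappa> * (cnj w1 * w1 + cnj w2 * w2))" .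
  have rk: "\<kappa> = complex_of_real (Re \<kappa>)" using E(1) by (metis Reals_cnj_iff complex_is_Real_iff of_real_Re)
  have "Im (cnj w1 * w1 + cnj w2 * w2) = 0" by simp
  then have "Re (\<kappa> * (cnj w1 * w1 + cnj w2 * w2)) = Re \<kappa> * Re (cnj w1 * w1 + cnj w2 * w2)"
    by (subst rk) simp
  with pos E(2) have "Re \<kappa> > 0" by (simp add: zero_less_mult_iff)
  with rk show ?thesis by simp
qed

lemma E1:
  fixes M :: "complex^2^2"
  assumes hM: "hermitian_mat M"
  shows "\<exists>w1 w2 \<kappa>. (w1 \<noteq> 0 \<or> w2 \<noteq> 0) \<and> M$1$1 * w1 + M$1$2 * w2 = \<kappa> * w1 \<and> M$2$1 * w1 + M$2$2 * w2 = \<kappa> * w2"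
proof (cases "M$1$2 = 0")
  case True
  then have "M$2$1 = 0" using herm(3)[OF hM] by simp
  then show ?thesis by (rule_tac exI[of _ "1::complex"], rule_tac exI[of _ "0::complex"], rule_tac exI[of _ "M$1$1"]) (simp add: True)
next
  case False
  define T where "T = M$1$1 + M$2$2"
  define D where "D = M$1$1 * M$2$2 - M$1$2 * M$2$1"
  define \<kappa> where "\<kappa> = (T + csqrt (T^2 - 4 * D)) / 2"
  have root: "\<kappa>^2 - T * \<kappa> + D = 0"
  proof -
    have h1: "csqrt (T^2 - 4 * D) * csqrt (T^2 - 4 * D) = T^2 - 4 * D" by (metis power2_csqrt power2_eq_square)
    have h2: "2 * \<kappa> = T + csqrt (T^2 - 4 * D)" unfolding \<kappa>_def by simp
    show ?thesis using h1 h2 by algebra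
  qed
  show ?thesis
  proof (rule exI[of _ "M$1$2"], rule exI[of _ "\<kappa> - M$1$1"], rule exI[of _ \<kappa>], intro conjI)
    show "M$1$2 \<noteq> 0 \<or> \<kappa> - M$1$1 \<noteq> 0" using False by simp
    show "M$1$1 * M$1$2 + M$1$2 * (\<kappa> - M$1$1) = \<kappa> * M$1$2" by (simp add: algebra_simps)
    show "M$2$1 * M$1$2 + M$2$2 * (\<kappa> - M$1$1) = \<kappa> * (\<kappa> - M$1$1)"
      using root unfolding T_def D_def by (simp add: algebra_simps power2_eq_square) (simp add: algebra_simps)?
  qed
qed

lemma E2:
  fixes A B :: "complex^2^2"
  assumes hA: "hermitian_mat A" and hB: "hermitian_mat B" and cm: "A ** B = B ** A"
  shows "\<exists>w1 w2 \<kappa> lam. (w1 \<noteq> 0 \<or> w2 \<noteq> 0) \<and>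
     B$1$1 * w1 + B$1$2 * w2 = \<kappa> * w1 \<and> B$2$1 * w1 + B$2$2 * w2 = \<kappa> * w2 \<and>
     A$1$1 * w1 + A$1$2 * w2 = lam * w1 \<and> A$2$1 * w1 + A$2$2 * w2 = lam * w2"
proof -
  have c11: "A$1$1 * B$1$1 + A$1$2 * B$2$1 = B$1$1 * A$1$1 + B$1$2 * A$2$1"
   and c12: "A$1$1 * B$1$2 + A$1$2 * B$2$2 = B$1$1 * A$1$2 + B$1$2 * A$2$2"
   and c21: "A$2$1 * B$1$1 + A$2$2 * B$2$1 = B$2$1 * A$1$1 + B$2$2 * A$2$1"
   and c22: "A$2$1 * B$1$2 + A$2$2 * B$2$2 = B$2$1 * A$1$2 + B$2$2 * A$2$2"
    using cm unfolding mat2_eq mm2 by auto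
  show ?thesis
  proof (cases "B$1$2 = 0")
    case B12: True
    then have B21: "B$2$1 = 0" using herm(3)[OF hB] by simp
    show ?thesis
    proof (cases "B$1$1 = B$2$2")
      case True
      obtain w1 w2 lam where w: "(w1 \<noteq> 0 \<or> w2 \<noteq> 0)" "A$1$1 * w1 + A$1$2 * w2 = lam * w1" "A$2$1 * w1 + A$2$2 * w2 = lam * w2"
        using E1[OF hA] by blast
      show ?thesis
        by (rule exI[of _ w1], rule exI[of _ w2], rule exI[of _ "B$1$1"], rule exI[of _ lam]) (insert w, auto simp: B12 B21 True)
    next
      case False
      have "A$1$2 * (B$2$2 - B$1$1) = 0" using c12 B12 by (simp add: algebra_simps)
      then have A12: "A$1$2 = 0" using False by simp
      then have A21: "A$2$1 = 0" using herm(3)[OF hA] by simp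
      show ?thesis
        by (rule exI[of _ "1::complex"], rule exI[of _ "0::complex"], rule exI[of _ "B$1$1"], rule exI[of _ "A$1$1"]) (simp add: A12 A21 B12 B21)
    qed
  next
    case False
    define T where "T = B$1$1 + B$2$2"
    define D where "D = B$1$1 * B$2$2 - B$1$2 * B$2$1"
    define \<kappa> where "\<kappa> = (T + csqrt (T^2 - 4 * D)) / 2"
    have root: "\<kappa>^2 - T * \<kappa> + D = 0"
    proof -
      have h1: "csqrt (T^2 - 4 * D) * csqrt (T^2 - 4 * D) = T^2 - 4 * D" by (metis power2_csqrt power2_eq_square)
      have h2: "2 * \<kappa> = T + csqrt (T^2 - 4 * D)" unfolding \<kappa>_def by simp
      show ?thesis using h1 h2 by algebra
    qed
    define w1 where "w1 = B$1$2"
    define w2 where "w2 = \<kappa> - B$1$1"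
    have b1: "B$1$1 * w1 + B$1$2 * w2 = \<kappa> * w1" unfolding w1_def w2_def by (simp add: algebra_simps)
    have b2: "B$2$1 * w1 + B$2$2 * w2 = \<kappa> * w2"
      using root unfolding T_def D_def w1_def w2_def by (simp add: algebra_simps power2_eq_square)
    define z1 where "z1 = A$1$1 * w1 + A$1$2 * w2"
    define z2 where "z2 = A$2$1 * w1 + A$2$2 * w2"
    have bz1: "B$1$1 * z1 + B$1$2 * z2 = \<kappa> * z1"
    proof -
      have "B$1$1 * z1 + B$1$2 * z2 = (B$1$1 * A$1$1 + B$1$2 * A$2$1) * w1 + (B$1$1 * A$1$2 + B$1$2 * A$2$2) * w2"
        unfolding z1_def z2_def by (simp add: algebra_simps)
      also have "\<dots> = (A$1$1 * B$1$1 + A$1$2 * B$2$1) * w1 + (A$1$1 * B$1$2 + A$1$2 * B$2$2) * w2"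
        using c11 c12 by simp
      also have "\<dots> = A$1$1 * (B$1$1 * w1 + B$1$2 * w2) + A$1$2 * (B$2$1 * w1 + B$2$2 * w2)"
        by (simp add: algebra_simps)
      also have "\<dots> = \<kappa> * z1" unfolding b1 b2 z1_def by (simp add: algebra_simps)
      finally show ?thesis .
    qed
    have z2: "z2 = w2 * (z1 / w1)"
      using bz1 False unfolding w1_def w2_def by (simp add: field_simps) (simp add: algebra_simps)?
    show ?thesis
    proof (rule exI[of _ w1], rule exI[of _ w2], rule exI[of _ \<kappa>], rule exI[of _ "z1 / w1"], intro conjI)
      show "w1 \<noteq> 0 \<or> w2 \<noteq> 0" using False w1_def by simp
      show "B$1$1 * w1 + B$1$2 * w2 = \<kappa> * w1" by (rule b1)
      show "B$2$1 * w1 + B$2$2 * w2 = \<kappa> * w2" by (rule b2)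
      show "A$1$1 * w1 + A$1$2 * w2 = z1 / w1 * w1" using False unfolding z1_def w1_def by simp
      show "A$2$1 * w1 + A$2$2 * w2 = z1 / w1 * w2" using z2 unfolding z2_def by simp
    qed
  qed
qed



lemma poly_zero_real:
  fixes p :: "complex poly"
  assumes "\<And>x::real. poly p (of_real x) = 0"
  shows "p = 0"
proof (rule ccontr)
  assume "p \<noteq> 0"
  then have "finite {z. poly p z = 0}" by (rule poly_roots_finite)
  moreover have "range (of_real :: real \<Rightarrow> complex) \<subseteq> {z. poly p z = 0}" using assms by auto
  moreover have "infinite (range (of_real :: real \<Rightarrow> complex))"
    by (metis finite_imageD inj_of_real infinite_UNIV_char_0)
  ultimately show False using finite_subset by blast
qed

lemma exp_tend: "c > 0 \<Longrightarrow> ((\<lambda>x::real. exp (- c * x^2)) \<longlongrightarrow> 0) at_top"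
  by real_asymp

lemma xexp_tend: "c > 0 \<Longrightarrow> ((\<lambda>x::real. x * exp (- c * x^2)) \<longlongrightarrow> 0) at_top"
  by real_asymp

lemma decay:
  fixes q :: "complex poly"
  shows "c > 0 \<Longrightarrow> ((\<lambda>x::real. poly q (of_real x) * of_real (exp (- c * x^2))) \<longlongrightarrow> 0) at_top"
proof (induction q arbitrary: c)
  case 0
  then show ?case by simp
next
  case (pCons a q)
  have c2: "c / 2 > 0" using pCons by simp
  have e: "exp (- c * x^2) = exp (- (c/2) * x^2) * exp (- (c/2) * x^2)" for x
    by (simp flip: exp_add)
  have L1: "((\<lambda>x::real. a * of_real (exp (- c * x^2))) \<longlongrightarrow> a * 0) at_top"
    by (intro tendsto_mult tendsto_const) (use tendsto_of_real[OF exp_tend[OF pCons.prems]] in simp)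
  have L2: "((\<lambda>x::real. of_real (x * exp (- (c/2) * x^2)) * (poly q (of_real x) * of_real (exp (- (c/2) * x^2)))) \<longlongrightarrow> (0::complex) * 0) at_top"
    apply (intro tendsto_mult pCons.IH c2)
    using tendsto_of_real[OF xexp_tend[OF c2], where 'a=complex] by simp
  have "((\<lambda>x::real. a * of_real (exp (- c * x^2)) + of_real (x * exp (- (c/2) * x^2)) * (poly q (of_real x) * of_real (exp (- (c/2) * x^2)))) \<longlongrightarrow> 0) at_top"
    using tendsto_add[OF L1 L2] by simp
  moreover have "a * of_real (exp (- c * x^2)) + of_real (x * exp (- (c/2) * x^2)) * (poly q (of_real x) * of_real (exp (- (c/2) * x^2)))
     = poly (pCons a q) (of_real x) * of_real (exp (- c * x^2))" for x
    unfolding e of_real_mult by (simp add: algebra_simps)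
  ultimately show ?case by simp
qed

lemma poly_not_tendsto0:
  fixes p :: "complex poly"
  assumes "p \<noteq> 0"
  shows "\<not> ((\<lambda>x::real. poly p (of_real x)) \<longlongrightarrow> 0) at_top"
proof
  assume T: "((\<lambda>x::real. poly p (of_real x)) \<longlongrightarrow> 0) at_top"
  obtain a p' where p: "p = pCons a p'" by (cases p) auto
  have ev: "eventually (\<lambda>x::real. norm (poly p (of_real x)) < 1/2 * norm (if p' = 0 then a else 1)) at_top"
  proof -
    have "norm (if p' = 0 then a else 1) > 0" using assms p by auto
    then have "1/2 * norm (if p' = 0 then a else 1) > 0" by simp
    from T[unfolded tendsto_iff, rule_format, OF this] show ?thesis by (simp add: dist_norm)
  qed
  show False
  proof (cases "p' = 0")
    case True
    have "eventually (\<lambda>x::real. False) at_top" using ev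
      by eventually_elim (simp add: p True)
    then show False by simp
  next
    case False
    obtain r where r: "\<forall>z. r \<le> norm z \<longrightarrow> 1 \<le> norm (poly (pCons a p') z)"
      using poly_infinity[OF False] by blast
    have "eventually (\<lambda>x::real. 1 \<le> norm (poly p (of_real x))) at_top"
      unfolding eventually_at_top_linorder p
      by (rule exI[of _ "\<bar>r\<bar>"]) (use r in auto)
    with ev have "eventually (\<lambda>x::real. False) at_top"
      by eventually_elim (simp add: False)
    then show False by simp
  qed
qed

lemma GL:
  fixes P Q :: "complex poly" and \<alpha> \<beta> :: real
  assumes eq: "\<And>x::real. poly P (of_real x) * of_real (exp (- \<alpha> * x^2 / 2)) + poly Q (of_real x) * of_real (exp (- \<beta> * x^2 / 2)) = 0"
    and lt: "\<alpha> < \<beta>"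
  shows "P = 0 \<and> Q = 0"
proof -
  define c where "c = (\<beta> - \<alpha>) / 2"
  have c: "c > 0" using lt unfolding c_def by simp
  have e: "exp (- \<beta> * x^2 / 2) = exp (- \<alpha> * x^2 / 2) * exp (- c * x^2)" for x
    unfolding c_def by (simp flip: exp_add add: field_simps)
  have "poly P (of_real x) = - poly Q (of_real x) * of_real (exp (- c * x^2))" for x
  proof -
    have "of_real (exp (- \<alpha> * x^2 / 2)) * (poly P (of_real x) + poly Q (of_real x) * of_real (exp (- c * x^2))) = 0"
      using eq[of x] unfolding e of_real_mult by (simp add: algebra_simps)
    then show ?thesis by (simp add: add_eq_0_iff)
  qed
  then have "((\<lambda>x::real. poly P (of_real x)) \<longlongrightarrow> 0) at_top"
    using tendsto_minus[OF decay[OF c, of Q]] by simp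
  then have P0: "P = 0" using poly_not_tendsto0 by blast
  then have "poly Q (of_real x) = 0" for x using eq[of x] by simp
  then have "Q = 0" by (rule poly_zero_real)
  with P0 show ?thesis by simp
qed

lemma GL_eq:
  fixes P Q :: "complex poly" and \<alpha> :: real
  assumes eq: "\<And>x::real. poly P (of_real x) * of_real (exp (- \<alpha> * x^2 / 2)) + poly Q (of_real x) * of_real (exp (- \<alpha> * x^2 / 2)) = 0"
  shows "P + Q = 0"
proof (rule poly_zero_real)
  fix x :: real
  have "(poly P (of_real x) + poly Q (of_real x)) * of_real (exp (- \<alpha> * x^2 / 2)) = 0"
    using eq[of x] by (simp add: algebra_simps)
  then show "poly (P + Q) (of_real x) = 0" by simp
qed

lemma poly_map_of_real: "poly (map_poly complex_of_real p) (of_real x) = of_real (poly p x)"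
  by (induction p) (auto simp: map_poly_pCons)

definition cH :: "real \<Rightarrow> nat \<Rightarrow> complex poly" where
  "cH \<alpha> n = map_poly complex_of_real (pcompose (hp n) [:0, sqrt \<alpha>:])"

lemma cH_poly: "poly (cH \<alpha> n) (of_real x) = of_real (poly (hp n) (sqrt \<alpha> * x))"
  unfolding cH_def poly_map_of_real by (simp add: poly_pcompose mult.commute)

lemma cH_deg: assumes "\<alpha> > 0" shows "degree (cH \<alpha> n) = n" "cH \<alpha> n \<noteq> 0"
proof -
  have d: "degree (pcompose (hp n) [:0, sqrt \<alpha>:]) = n"
    using assms hp_deg[of n] by (simp add: degree_pcompose)
  show "degree (cH \<alpha> n) = n" unfolding cH_def using d by (subst degree_map_poly) auto
  show "cH \<alpha> n \<noteq> 0"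
  proof
    assume "cH \<alpha> n = 0"
    have "poly (hp n) z = 0" for z
    proof -
      have "poly (cH \<alpha> n) (of_real (z / sqrt \<alpha>)) = 0" using \<open>cH \<alpha> n = 0\<close> by simp
      then show ?thesis using assms unfolding cH_poly by simp
    qed
    then have "hp n = 0" using poly_all_0_iff_0 by blast
    then show False using hp_deg[of n] by simp
  qed
qed

lemma degR: "degree ([:c0, 0, c2:] :: complex poly) \<le> 2" "c2 \<noteq> 0 \<Longrightarrow> degree ([:c0, 0, c2:] :: complex poly) = 2"
  by (auto simp: degree_pCons_eq_if)

lemma degRH:
  fixes K c0 c2 :: complex and H :: "complex poly"
  assumes "K \<noteq> 0" "c2 \<noteq> 0" "H \<noteq> 0"
  shows "degree (smult K ([:c0, 0, c2:] * H)) = degree H + 2"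
proof -
  have R: "[:c0, 0, c2:] \<noteq> 0" using assms by simp
  have d: "degree (smult K X) = degree X" for X :: "complex poly" using assms(1) by simp
  show ?thesis
    unfolding d degree_mult_eq[OF R assms(3)] degR(2)[OF assms(2)] by simp
qed

lemma PQ:
  fixes K1 K2 e0 e2 f0 f2 :: complex and H1 H2 :: "complex poly"
  assumes K: "K1 \<noteq> 0" "K2 \<noteq> 0" and H: "H1 \<noteq> 0" "H2 \<noteq> 0" and dlt: "degree H1 < degree H2"
    and eq: "smult K1 ([:e0, 0, e2:] * H1) + smult K2 ([:f0, 0, f2:] * H2) = 0"
  shows "f2 = 0 \<and> (e2 = 0 \<longrightarrow> e0 = 0 \<and> f0 = 0) \<and> (e2 \<noteq> 0 \<longrightarrow> degree H2 = degree H1 + 2)"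
proof -
  define P where "P = smult K1 ([:e0, 0, e2:] * H1)"
  define Q where "Q = smult K2 ([:f0, 0, f2:] * H2)"
  have PQ: "P = - Q" using eq unfolding P_def Q_def by (simp add: eq_neg_iff_add_eq_0)
  then have dPQ: "degree P = degree Q" by simp
  have dm: "degree ([:e0, 0, e2:] * H1) \<le> degree H1 + 2"
    using degree_mult_le[of "[:e0, 0, e2:]" H1] degR(1)[of e0 e2] by linarith
  have dP: "degree P \<le> degree H1 + 2" unfolding P_def by (rule le_trans[OF degree_smult_le dm])
  have f2: "f2 = 0"
  proof (rule ccontr)
    assume f2: "f2 \<noteq> 0"
    then have "degree Q = degree H2 + 2" unfolding Q_def using K H by (intro degRH)
    then show False using dP dPQ dlt by simp
  qed
  then have Q: "Q = smult (K2 * f0) H2" unfolding Q_def by simp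
  have I1: "e0 = 0 \<and> f0 = 0" if e2: "e2 = 0"
  proof -
    from e2 have P: "P = smult (K1 * e0) H1" unfolding P_def by simp
    have f0: "f0 = 0"
    proof (rule ccontr)
      assume "f0 \<noteq> 0"
      then have "degree Q = degree H2" using Q K by simp
      moreover have "degree P \<le> degree H1" using P by simp
      ultimately show False using dPQ dlt by simp
    qed
    then have "P = 0" using PQ Q by simp
    then have "e0 = 0" using P K H by simp
    with f0 show "e0 = 0 \<and> f0 = 0" by simp
  qed
  have I2: "degree H2 = degree H1 + 2" if e2: "e2 \<noteq> 0"
  proof -
    from e2 have dP2: "degree P = degree H1 + 2" unfolding P_def using K H by (intro degRH)
    have "f0 \<noteq> 0"
    proof
      assume "f0 = 0"
      then have "P = 0" using PQ Q by simp
      moreover have "[:e0, 0, e2:] \<noteq> 0" using e2 by simp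
      ultimately show False using K H unfolding P_def by (metis smult_eq_0_iff mult_eq_0_iff)
    qed
    then have "degree Q = degree H2" using Q K by simp
    then show "degree H2 = degree H1 + 2" using dP2 dPQ by simp
  qed
  show ?thesis using f2 I1 I2 by blast
qed



lemma scC: "r *\<^sub>R (z::complex) = of_real r * z"
  by (simp add: scaleR_conv_of_real)

lemma scaleR_c2: "(r *\<^sub>R w :: complex^2) $ i = of_real r * w $ i"
  unfolding vector_scaleR_component by (simp add: scaleR_conv_of_real)

lemma ofreal_smult: "complex_of_real r *s (w :: complex^2) = r *\<^sub>R w"
  by (simp add: vec_eq_iff scC)

lemma funeq: "(\<lambda>x. vector [a * complex_of_real (f x), b * complex_of_real (g x)] :: complex^2)
   = (\<lambda>x. f x *\<^sub>R vector [a, 0] + g x *\<^sub>R vector [0, b])"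
  by (rule ext) (simp add: vec2_eq scC mult.commute)

lemma hf_HOP:
  fixes u v :: "complex^2" and n m :: nat
  assumes "\<alpha> > 0" "\<beta> > 0"
  defines "\<Phi> \<equiv> (\<lambda>x. hermite_fn \<alpha> n x *\<^sub>R u + hermite_fn \<beta> m x *\<^sub>R v)"
  shows "(\<forall>x. \<Phi> differentiable (at x))"
    "(\<forall>x. (\<lambda>t. vector_derivative \<Phi> (at t)) differentiable (at x))"
    "H_op A B \<Phi> x = B *v (- (((\<alpha>^2 * x^2 - (2 * real n + 1) * \<alpha>) * hermite_fn \<alpha> n x) *\<^sub>R u
         + ((\<beta>^2 * x^2 - (2 * real m + 1) * \<beta>) * hermite_fn \<beta> m x) *\<^sub>R v))
       + complex_of_real (x^2) *s (A *v (hermite_fn \<alpha> n x *\<^sub>R u + hermite_fn \<beta> m x *\<^sub>R v))"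
  unfolding \<Phi>_def
  using HOP[OF hf_deriv1[of \<alpha> n] hf_deriv2[OF assms(1), of n] hf_deriv1[of \<beta> m] hf_deriv2[OF assms(2), of m], where u=u and v=v] by auto

lemma ROW:
  fixes u v :: "complex^2" and \<mu> :: complex
  assumes a: "\<alpha> > 0" and b: "\<beta> > 0"
    and eig: "\<And>x. H_op A B (\<lambda>x. hermite_fn \<alpha> n x *\<^sub>R u + hermite_fn \<beta> m x *\<^sub>R v) x
       = \<mu> *s (hermite_fn \<alpha> n x *\<^sub>R u + hermite_fn \<beta> m x *\<^sub>R v)"
  shows "poly (smult (of_real (hK \<alpha> n)) ([: of_real ((2 * real n + 1) * \<alpha>) * (B *v u)$i - \<mu> * u$i, 0,
              (A *v u)$i - of_real (\<alpha>^2) * (B *v u)$i :] * cH \<alpha> n)) (of_real x) * of_real (exp (- \<alpha> * x^2 / 2))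
       + poly (smult (of_real (hK \<beta> m)) ([: of_real ((2 * real m + 1) * \<beta>) * (B *v v)$i - \<mu> * v$i, 0,
              (A *v v)$i - of_real (\<beta>^2) * (B *v v)$i :] * cH \<beta> m)) (of_real x) * of_real (exp (- \<beta> * x^2 / 2)) = 0"
proof -
  define F where "F = complex_of_real (hermite_fn \<alpha> n x)"
  define G where "G = complex_of_real (hermite_fn \<beta> m x)"
  have C: "(H_op A B (\<lambda>x. hermite_fn \<alpha> n x *\<^sub>R u + hermite_fn \<beta> m x *\<^sub>R v) x) $ i
       = (\<mu> *s (hermite_fn \<alpha> n x *\<^sub>R u + hermite_fn \<beta> m x *\<^sub>R v)) $ i"
    using eig by simp
  have C2: "B$i$1 * (- (of_real ((\<alpha>^2 * x^2 - (2 * real n + 1) * \<alpha>)) * F * u$1 + of_real ((\<beta>^2 * x^2 - (2 * real m + 1) * \<beta>)) * G * v$1))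
     + B$i$2 * (- (of_real ((\<alpha>^2 * x^2 - (2 * real n + 1) * \<alpha>)) * F * u$2 + of_real ((\<beta>^2 * x^2 - (2 * real m + 1) * \<beta>)) * G * v$2))
     + of_real (x^2) * (A$i$1 * (F * u$1 + G * v$1) + A$i$2 * (F * u$2 + G * v$2))
     = \<mu> * (F * u$i + G * v$i)"
    using C unfolding hf_HOP(3)[OF a b] F_def G_def
    by (simp add: mv2 scC algebra_simps)
  have R: "F * ((of_real ((2 * real n + 1) * \<alpha>) * (B *v u)$i - \<mu> * u$i) + of_real (x^2) * ((A *v u)$i - of_real (\<alpha>^2) * (B *v u)$i))
      + G * ((of_real ((2 * real m + 1) * \<beta>) * (B *v v)$i - \<mu> * v$i) + of_real (x^2) * ((A *v v)$i - of_real (\<beta>^2) * (B *v v)$i)) = 0"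
    using C2 unfolding mv2 by (simp add: algebra_simps)
  have pF: "poly (smult (of_real (hK \<alpha> n)) ([:c0, 0, c2:] * cH \<alpha> n)) (of_real x) * of_real (exp (- \<alpha> * x^2 / 2))
     = F * (c0 + of_real (x^2) * c2)" for c0 c2
    unfolding F_def hermite_fn_eq by (simp add: cH_poly algebra_simps power2_eq_square)
  have pG: "poly (smult (of_real (hK \<beta> m)) ([:c0, 0, c2:] * cH \<beta> m)) (of_real x) * of_real (exp (- \<beta> * x^2 / 2))
     = G * (c0 + of_real (x^2) * c2)" for c0 c2
    unfolding G_def hermite_fn_eq by (simp add: cH_poly algebra_simps power2_eq_square)
  show ?thesis unfolding pF pG using R .
qed

lemma ZR:
  fixes K c0 c2 :: complex and H :: "complex poly"
  assumes "K \<noteq> 0" "H \<noteq> 0" "smult K ([:c0, 0, c2:] * H) = 0"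
  shows "c0 = 0 \<and> c2 = 0"
proof -
  have "[:c0, 0, c2:] = 0" using assms by (metis smult_eq_0_iff mult_eq_0_iff)
  then show ?thesis by simp
qed

lemma ZR2:
  fixes K a0 a2 b0 b2 :: complex and H :: "complex poly"
  assumes "K \<noteq> 0" "H \<noteq> 0" "smult K ([:a0, 0, a2:] * H) + smult K ([:b0, 0, b2:] * H) = 0"
  shows "a0 + b0 = 0 \<and> a2 + b2 = 0"
proof -
  have "smult K ([:a0, 0, a2:] * H) + smult K ([:b0, 0, b2:] * H) = smult K (([:a0, 0, a2:] + [:b0, 0, b2:]) * H)"
    by (simp only: smult_add_right distrib_right)
  also have "[:a0, 0, a2:] + [:b0, 0, b2:] = [:a0 + b0, 0, a2 + b2:]" by simp
  finally show ?thesis using ZR assms by metis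
qed

lemma GL_all:
  fixes P Q :: "complex poly" and \<alpha> \<beta> :: real
  assumes eq: "\<And>x::real. poly P (of_real x) * of_real (exp (- \<alpha> * x^2 / 2)) + poly Q (of_real x) * of_real (exp (- \<beta> * x^2 / 2)) = 0"
  shows "(\<alpha> \<noteq> \<beta> \<longrightarrow> P = 0 \<and> Q = 0) \<and> (\<alpha> = \<beta> \<longrightarrow> P + Q = 0)"
proof (rule conjI; rule impI)
  assume "\<alpha> \<noteq> \<beta>"
  then consider "\<alpha> < \<beta>" | "\<beta> < \<alpha>" by linarith
  then show "P = 0 \<and> Q = 0"
  proof cases
    case 1 then show ?thesis using GL[OF eq] by blast
  next
    case 2
    have "poly Q (of_real x) * of_real (exp (- \<beta> * x^2 / 2)) + poly P (of_real x) * of_real (exp (- \<alpha> * x^2 / 2)) = 0" for x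
      using eq[of x] by (simp add: add.commute)
    then show ?thesis using GL 2 by blast
  qed
next
  assume "\<alpha> = \<beta>"
  then show "P + Q = 0" using GL_eq eq by blast
qed

lemma DIAG:
  fixes A B :: "complex^2^2"
  assumes "hermitian_mat A" "hermitian_mat B" "A$1$2 = 0" "B$1$2 = 0"
  shows "A ** B = B ** A"
  using herm(3)[OF assms(1)] herm(3)[OF assms(2)] assms(3,4) unfolding mat2_eq mm2 by (simp add: algebra_simps)

lemma Part1a:
  fixes A B :: "complex^2^2" and a b :: complex and \<alpha> \<beta> :: real and n m :: nat
  assumes hA: "hermitian_mat A" and hB: "hermitian_mat B"
    and nz: "a \<noteq> 0 \<or> b \<noteq> 0" and pa: "\<alpha> > 0" and pb: "\<beta> > 0"
    and ef: "eigenfunction_H A B (\<lambda>x. vector [a * complex_of_real (hermite_fn \<alpha> n x),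
                             b * complex_of_real (hermite_fn \<beta> m x)])"
  shows "A ** B = B ** A"
proof -
  define u :: "complex^2" where "u = vector [a, 0]"
  define v :: "complex^2" where "v = vector [0, b]"
  obtain \<mu> where eig: "\<And>x. H_op A B (\<lambda>x. hermite_fn \<alpha> n x *\<^sub>R u + hermite_fn \<beta> m x *\<^sub>R v) x
       = \<mu> *s (hermite_fn \<alpha> n x *\<^sub>R u + hermite_fn \<beta> m x *\<^sub>R v)"
    using ef unfolding eigenfunction_H_def funeq u_def v_def by blast
  note hA' = herm[OF hA] and hB' = herm[OF hB]
  define K1 where "K1 = complex_of_real (hK \<alpha> n)"
  define K2 where "K2 = complex_of_real (hK \<beta> m)"
  define H1 where "H1 = cH \<alpha> n"
  define H2 where "H2 = cH \<beta> m"
  define l where "l = complex_of_real ((2 * real n + 1) * \<alpha>)"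
  define r where "r = complex_of_real ((2 * real m + 1) * \<beta>)"
  define aa where "aa = complex_of_real (\<alpha>^2)"
  define bb where "bb = complex_of_real (\<beta>^2)"
  have K1: "K1 \<noteq> 0" and K2: "K2 \<noteq> 0" unfolding K1_def K2_def using hK_pos[OF pa, of n] hK_pos[OF pb, of m] by auto
  have H1: "H1 \<noteq> 0" and H2: "H2 \<noteq> 0" unfolding H1_def H2_def using cH_deg pa pb by auto
  have dH1: "degree H1 = n" and dH2: "degree H2 = m" unfolding H1_def H2_def using cH_deg pa pb by auto
  have "(2 * real n + 1) * \<alpha> > 0" "(2 * real m + 1) * \<beta> > 0" using pa pb by simp_all
  then have l0: "l \<noteq> 0" and r0: "r \<noteq> 0" unfolding l_def r_def of_real_eq_0_iff by (metis less_irrefl)+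
  have caa: "cnj aa = aa" unfolding aa_def by simp
  have cb: "(B *v u)$1 = B$1$1 * a" "(B *v u)$2 = B$2$1 * a" "(A *v u)$1 = A$1$1 * a" "(A *v u)$2 = A$2$1 * a"
    "(B *v v)$1 = B$1$2 * b" "(B *v v)$2 = B$2$2 * b" "(A *v v)$1 = A$1$2 * b" "(A *v v)$2 = A$2$2 * b"
    "u$1 = a" "u$2 = 0" "v$1 = 0" "v$2 = b"
    unfolding u_def v_def mv2 by simp_all
  define e01 where "e01 = l * (B$1$1 * a) - \<mu> * a"
  define e21 where "e21 = A$1$1 * a - aa * (B$1$1 * a)"
  define f01 where "f01 = r * (B$1$2 * b) - \<mu> * 0"
  define f21 where "f21 = A$1$2 * b - bb * (B$1$2 * b)"
  define e02 where "e02 = l * (B$2$1 * a) - \<mu> * 0"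
  define e22 where "e22 = A$2$1 * a - aa * (B$2$1 * a)"
  define f02 where "f02 = r * (B$2$2 * b) - \<mu> * b"
  define f22 where "f22 = A$2$2 * b - bb * (B$2$2 * b)"
  have G1: "(\<alpha> \<noteq> \<beta> \<longrightarrow> smult K1 ([:e01, 0, e21:] * H1) = 0 \<and> smult K2 ([:f01, 0, f21:] * H2) = 0)
     \<and> (\<alpha> = \<beta> \<longrightarrow> smult K1 ([:e01, 0, e21:] * H1) + smult K2 ([:f01, 0, f21:] * H2) = 0)"
    apply (rule GL_all)
    unfolding K1_def K2_def H1_def H2_def l_def r_def aa_def bb_def e01_def e21_def f01_def f21_def
    by (rule ROW[OF pa pb eig, of 1, unfolded cb])
  have G2: "(\<alpha> \<noteq> \<beta> \<longrightarrow> smult K1 ([:e02, 0, e22:] * H1) = 0 \<and> smult K2 ([:f02, 0, f22:] * H2) = 0)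
     \<and> (\<alpha> = \<beta> \<longrightarrow> smult K1 ([:e02, 0, e22:] * H1) + smult K2 ([:f02, 0, f22:] * H2) = 0)"
    apply (rule GL_all)
    unfolding K1_def K2_def H1_def H2_def l_def r_def aa_def bb_def e02_def e22_def f02_def f22_def
    by (rule ROW[OF pa pb eig, of 2, unfolded cb])
  have fin1: "A ** B = B ** A" if "f01 = 0" "f21 = 0" "b \<noteq> 0"
  proof -
    have "B$1$2 = 0" using that(1,3) r0 unfolding f01_def by simp
    moreover then have "A$1$2 = 0" using that(2,3) unfolding f21_def by simp
    ultimately show ?thesis using DIAG hA hB by blast
  qed
  have fin2: "A ** B = B ** A" if "e02 = 0" "e22 = 0" "a \<noteq> 0"
  proof -
    have "B$2$1 = 0" using that(1,3) l0 unfolding e02_def by simp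
    moreover then have "A$2$1 = 0" using that(2,3) unfolding e22_def by simp
    ultimately show ?thesis using DIAG hA hB hA' hB' by (metis complex_cnj_zero_iff)
  qed
  show ?thesis
  proof (cases "a = 0")
    case a0: True
    then have b0: "b \<noteq> 0" using nz by simp
    have "e01 = 0" "e21 = 0" unfolding e01_def e21_def using a0 by simp_all
    then have "smult K2 ([:f01, 0, f21:] * H2) = 0" using G1 by (cases "\<alpha> = \<beta>") auto
    then show ?thesis using ZR[OF K2 H2] fin1 b0 by blast
  next
    case a0: False
    show ?thesis
    proof (cases "b = 0")
      case b0: True
      have "f02 = 0" "f22 = 0" unfolding f02_def f22_def using b0 by simp_all
      then have "smult K1 ([:e02, 0, e22:] * H1) = 0" using G2 by (cases "\<alpha> = \<beta>") auto
      then show ?thesis using ZR[OF K1 H1] fin2 a0 by blast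
    next
      case b0: False
      show ?thesis
      proof (cases "\<alpha> = \<beta>")
        case False
        then have "smult K2 ([:f01, 0, f21:] * H2) = 0" using G1 by auto
        then show ?thesis using ZR[OF K2 H2] fin1 b0 by blast
      next
        case ab: True
        then have Eq1: "smult K1 ([:e01, 0, e21:] * H1) + smult K2 ([:f01, 0, f21:] * H2) = 0"
          and Eq2: "smult K1 ([:e02, 0, e22:] * H1) + smult K2 ([:f02, 0, f22:] * H2) = 0"
          using G1 G2 by auto
        consider "n = m" | "n < m" | "m < n" by linarith
        then show ?thesis
        proof cases
          case 1
          have KK: "K2 = K1" "H2 = H1" "r = l" "bb = aa" unfolding K1_def K2_def H1_def H2_def r_def l_def aa_def bb_def
            using 1 ab by simp_all
          have s1: "e01 + f01 = 0 \<and> e21 + f21 = 0" using ZR2[OF K1 H1] Eq1 unfolding KK by blast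
          have s2: "e02 + f02 = 0 \<and> e22 + f22 = 0" using ZR2[OF K1 H1] Eq2 unfolding KK by blast
          define \<kappa> where "\<kappa> = \<mu> / l"
          show ?thesis
          proof (rule CE[OF hA hB nz, of \<kappa> "\<alpha>^2"])
            show "B$1$1 * a + B$1$2 * b = \<kappa> * a" using s1 l0 unfolding e01_def f01_def \<kappa>_def KK
              by (simp add: field_simps) (simp add: algebra_simps add_eq_0_iff)?
            show "B$2$1 * a + B$2$2 * b = \<kappa> * b" using s2 l0 unfolding e02_def f02_def \<kappa>_def KK
              by (simp add: field_simps) (simp add: algebra_simps add_eq_0_iff)?
            show "A$1$1 * a + A$1$2 * b = complex_of_real (\<alpha>^2) * (B$1$1 * a + B$1$2 * b)"
              using s1 unfolding e21_def f21_def KK aa_def by (simp add: algebra_simps add_eq_0_iff)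
            show "A$2$1 * a + A$2$2 * b = complex_of_real (\<alpha>^2) * (B$2$1 * a + B$2$2 * b)"
              using s2 unfolding e22_def f22_def KK aa_def by (simp add: algebra_simps add_eq_0_iff)
          qed
        next
          case 2
          have bbaa: "bb = aa" unfolding aa_def bb_def using ab by simp
          have "f21 = 0" using PQ[OF K1 K2 H1 H2 _ Eq1] dH1 dH2 2 by simp
          then have A12: "A$1$2 = aa * B$1$2" using b0 unfolding f21_def bbaa by simp
          then have "A$2$1 = aa * B$2$1" using hA' hB' caa by (metis complex_cnj_mult)
          then have "e22 = 0" unfolding e22_def by simp
          then have "e02 = 0" using PQ[OF K1 K2 H1 H2 _ Eq2] dH1 dH2 2 by simp
          moreover have "B$2$1 = 0" using calculation a0 l0 unfolding e02_def by simp
          then have "B$1$2 = 0" using hB' by (metis complex_cnj_zero_iff)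
          then have "A$1$2 = 0" using A12 by simp
          show ?thesis using DIAG[OF hA hB] \<open>A$1$2 = 0\<close> \<open>B$1$2 = 0\<close> by blast
        next
          case 3
          have bbaa: "bb = aa" unfolding aa_def bb_def using ab by simp
          have Eq2': "smult K2 ([:f02, 0, f22:] * H2) + smult K1 ([:e02, 0, e22:] * H1) = 0"
            using Eq2 by (simp add: add.commute)
          have Eq1': "smult K2 ([:f01, 0, f21:] * H2) + smult K1 ([:e01, 0, e21:] * H1) = 0"
            using Eq1 by (simp add: add.commute)
          have "e22 = 0" using PQ[OF K2 K1 H2 H1 _ Eq2'] dH1 dH2 3 by simp
          then have A21: "A$2$1 = aa * B$2$1" using a0 unfolding e22_def by simp
          then have "A$1$2 = aa * B$1$2" using hA' hB' caa by (metis complex_cnj_mult complex_cnj_cnj)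
          then have "f21 = 0" unfolding f21_def bbaa by simp
          then have "f01 = 0" using PQ[OF K2 K1 H2 H1 _ Eq1'] dH1 dH2 3 by simp
          then show ?thesis using fin1 \<open>f21 = 0\<close> b0 by blast
        qed
      qed
    qed
  qed
qed

lemma Part1b:
  fixes A B :: "complex^2^2"
  assumes pA: "pos_def_mat A" and pB: "pos_def_mat B" and cm: "A ** B = B ** A"
  shows "\<exists>a b :: complex. \<exists>\<alpha> \<beta> :: real. \<exists>n m :: nat.
             (a \<noteq> 0 \<or> b \<noteq> 0) \<and> \<alpha> > 0 \<and> \<beta> > 0 \<and>
             eigenfunction_H A B
               (\<lambda>x. vector [a * complex_of_real (hermite_fn \<alpha> n x),
                             b * complex_of_real (hermite_fn \<beta> m x)])"
proof -
  have hA: "hermitian_mat A" and hB: "hermitian_mat B" using pA pB unfolding pos_def_mat_def by auto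
  obtain w1 w2 \<kappa> lam where nz: "w1 \<noteq> 0 \<or> w2 \<noteq> 0"
    and b1: "B$1$1 * w1 + B$1$2 * w2 = \<kappa> * w1" and b2: "B$2$1 * w1 + B$2$2 * w2 = \<kappa> * w2"
    and a1: "A$1$1 * w1 + A$1$2 * w2 = lam * w1" and a2: "A$2$1 * w1 + A$2$2 * w2 = lam * w2"
    using E2[OF hA hB cm] by blast
  define k where "k = Re \<kappa>"
  define l where "l = Re lam"
  have k: "\<kappa> = of_real k" "k > 0" using EVpos[OF pB nz b1 b2] unfolding k_def by auto
  have l: "lam = of_real l" "l > 0" using EVpos[OF pA nz a1 a2] unfolding l_def by auto
  define \<alpha> where "\<alpha> = sqrt (l / k)"
  have pa: "\<alpha> > 0" unfolding \<alpha>_def using k l by simp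
  have aa: "\<alpha>^2 * k = l" unfolding \<alpha>_def using k l by simp
  define u :: "complex^2" where "u = vector [w1, 0]"
  define v :: "complex^2" where "v = vector [0, w2]"
  define \<Phi> where "\<Phi> = (\<lambda>x. hermite_fn \<alpha> 0 x *\<^sub>R u + hermite_fn \<alpha> 0 x *\<^sub>R v)"
  have ef: "eigenfunction_H A B \<Phi>"
    unfolding eigenfunction_H_def
  proof (intro conjI)
    show "\<forall>x. \<Phi> differentiable (at x)" unfolding \<Phi>_def by (rule hf_HOP(1)[OF pa pa])
    show "\<forall>x. (\<lambda>t. vector_derivative \<Phi> (at t)) differentiable (at x)" unfolding \<Phi>_def by (rule hf_HOP(2)[OF pa pa])
    show "\<Phi> \<noteq> (\<lambda>x. 0)"
    proof
      assume "\<Phi> = (\<lambda>x. 0)"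
      then have "\<Phi> 0 = 0" by simp
      moreover have "hermite_fn \<alpha> 0 0 = hK \<alpha> 0" unfolding hermite_fn_eq by simp
      ultimately have "hK \<alpha> 0 *\<^sub>R u + hK \<alpha> 0 *\<^sub>R v = 0" unfolding \<Phi>_def by simp
      then have "of_real (hK \<alpha> 0) * w1 = 0 \<and> of_real (hK \<alpha> 0) * w2 = 0"
        unfolding u_def v_def vec2_eq by (simp add: scC)
      then show False using hK_pos[OF pa, of 0] nz by auto
    qed
    show "\<exists>\<mu>. \<forall>x. H_op A B \<Phi> x = \<mu> *s \<Phi> x"
    proof (intro exI allI)
      fix x
      define h where "h = complex_of_real (hermite_fn \<alpha> 0 x)"
      have c1: "(H_op A B \<Phi> x)$1 = h * (- of_real (\<alpha>^2 * x^2 - \<alpha>) * (B$1$1 * w1 + B$1$2 * w2) + of_real (x^2) * (A$1$1 * w1 + A$1$2 * w2))"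
        unfolding \<Phi>_def hf_HOP(3)[OF pa pa] h_def u_def v_def by (simp add: mv2 scC algebra_simps)
      have c2: "(H_op A B \<Phi> x)$2 = h * (- of_real (\<alpha>^2 * x^2 - \<alpha>) * (B$2$1 * w1 + B$2$2 * w2) + of_real (x^2) * (A$2$1 * w1 + A$2$2 * w2))"
        unfolding \<Phi>_def hf_HOP(3)[OF pa pa] h_def u_def v_def by (simp add: mv2 scC algebra_simps)
      have p1: "(\<Phi> x)$1 = h * w1" and p2: "(\<Phi> x)$2 = h * w2"
        unfolding \<Phi>_def h_def u_def v_def by (simp_all add: scC)
      have lk: "complex_of_real l = of_real (\<alpha>^2) * of_real k" using aa by (metis of_real_mult)
      show "H_op A B \<Phi> x = complex_of_real (\<alpha> * k) *s \<Phi> x"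
        unfolding vec2_eq using c1 c2 p1 p2 unfolding b1 b2 a1 a2 k(1) l(1) lk
        by (simp add: algebra_simps)
    qed
  qed
  show ?thesis
    by (rule exI[of _ w1], rule exI[of _ w2], rule exI[of _ \<alpha>], rule exI[of _ \<alpha>], rule exI[of _ 0], rule exI[of _ 0])
       (use nz pa ef in \<open>simp add: funeq \<Phi>_def u_def v_def\<close>)
qed

lemma CEv:
  fixes A B :: "complex^2^2" and w :: "complex^2" and c \<mu> :: complex and \<alpha> :: real
  assumes hA: "hermitian_mat A" and hB: "hermitian_mat B" and nz: "w \<noteq> 0" and c: "c \<noteq> 0"
    and e0: "\<And>i. c * (B *v w)$i - \<mu> * w$i = 0"
    and e2: "\<And>i. (A *v w)$i - complex_of_real (\<alpha>^2) * (B *v w)$i = 0"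
  shows "A ** B = B ** A"
proof (rule CE[OF hA hB _ _ _ _ _, of "w$1" "w$2" "\<mu> / c" "\<alpha>^2"])
  show "w$1 \<noteq> 0 \<or> w$2 \<noteq> 0" using nz by (auto simp: vec2_eq)
  show "B$1$1 * w$1 + B$1$2 * w$2 = \<mu> / c * w$1" using e0[of 1] c unfolding mv2 by (simp add: field_simps)
  show "B$2$1 * w$1 + B$2$2 * w$2 = \<mu> / c * w$2" using e0[of 2] c unfolding mv2 by (simp add: field_simps)
  show "A$1$1 * w$1 + A$1$2 * w$2 = complex_of_real (\<alpha>^2) * (B$1$1 * w$1 + B$1$2 * w$2)" using e2[of 1] unfolding mv2 by simp
  show "A$2$1 * w$1 + A$2$2 * w$2 = complex_of_real (\<alpha>^2) * (B$2$1 * w$1 + B$2$2 * w$2)" using e2[of 2] unfolding mv2 by simp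
qed

lemma Part2:
  fixes A B :: "complex^2^2" and v0 v1 :: "complex^2" and \<alpha> :: real
  assumes hA: "hermitian_mat A" and hB: "hermitian_mat B" and ncm: "A ** B \<noteq> B ** A" and pa: "\<alpha> > 0"
    and nz: "(\<lambda>x. complex_of_real (hermite_fn \<alpha> 0 x) *s v0 + complex_of_real (hermite_fn \<alpha> 1 x) *s v1) \<noteq> (\<lambda>x. 0)"
    and ef: "eigenfunction_H A B (\<lambda>x. complex_of_real (hermite_fn \<alpha> 0 x) *s v0 + complex_of_real (hermite_fn \<alpha> 1 x) *s v1)"
  shows False
proof -
  obtain \<mu> where eig: "\<And>x. H_op A B (\<lambda>x. hermite_fn \<alpha> 0 x *\<^sub>R v0 + hermite_fn \<alpha> 1 x *\<^sub>R v1) x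
       = \<mu> *s (hermite_fn \<alpha> 0 x *\<^sub>R v0 + hermite_fn \<alpha> 1 x *\<^sub>R v1)"
    using ef unfolding eigenfunction_H_def ofreal_smult by blast
  define K1 where "K1 = complex_of_real (hK \<alpha> 0)"
  define K2 where "K2 = complex_of_real (hK \<alpha> 1)"
  define H1 where "H1 = cH \<alpha> 0"
  define H2 where "H2 = cH \<alpha> 1"
  define c0 where "c0 = complex_of_real ((2 * real (0::nat) + 1) * \<alpha>)"
  define c1 where "c1 = complex_of_real ((2 * real (1::nat) + 1) * \<alpha>)"
  have K1: "K1 \<noteq> 0" and K2: "K2 \<noteq> 0" unfolding K1_def K2_def using hK_pos[OF pa, of 0] hK_pos[OF pa, of 1] by auto
  have H1: "H1 \<noteq> 0" and H2: "H2 \<noteq> 0" unfolding H1_def H2_def using cH_deg pa by auto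
  have dH1: "degree H1 = 0" and dH2: "degree H2 = 1" unfolding H1_def H2_def using cH_deg pa by auto
  have c0: "c0 \<noteq> 0" and c1: "c1 \<noteq> 0" unfolding c0_def c1_def using pa by simp_all
  have coef: "c0 * (B *v v0)$i - \<mu> * v0$i = 0 \<and> (A *v v0)$i - complex_of_real (\<alpha>^2) * (B *v v0)$i = 0 \<and>
     c1 * (B *v v1)$i - \<mu> * v1$i = 0 \<and> (A *v v1)$i - complex_of_real (\<alpha>^2) * (B *v v1)$i = 0" for i
  proof -
    have "smult K1 ([:c0 * (B *v v0)$i - \<mu> * v0$i, 0, (A *v v0)$i - complex_of_real (\<alpha>^2) * (B *v v0)$i:] * H1)
       + smult K2 ([:c1 * (B *v v1)$i - \<mu> * v1$i, 0, (A *v v1)$i - complex_of_real (\<alpha>^2) * (B *v v1)$i:] * H2) = 0"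
      unfolding K1_def K2_def H1_def H2_def c0_def c1_def
      by (rule GL_eq, rule ROW[OF pa pa eig, of i])
    from PQ[OF K1 K2 H1 H2 _ this] dH1 dH2 show ?thesis by auto
  qed
  show False
  proof (cases "v0 = 0")
    case False
    then show False using CEv[OF hA hB False c0, of \<mu> \<alpha>] coef ncm by blast
  next
    case v0: True
    show False
    proof (cases "v1 = 0")
      case False
      then show False using CEv[OF hA hB False c1, of \<mu> \<alpha>] coef ncm by blast
    next
      case True
      then show False using nz v0 by simp
    qed
  qed
qed

theorem lemma3p1:
  fixes A B :: "complex^2^2"
  assumes "pos_def_mat A" and "pos_def_mat B"
  shows "((\<exists>a b :: complex. \<exists>\<alpha> \<beta> :: real. \<exists>n m :: nat.
             (a \<noteq> 0 \<or> b \<noteq> 0) \<and> \<alpha> > 0 \<and> \<beta> > 0 \<and>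
             eigenfunction_H A B
               (\<lambda>x. vector [a * complex_of_real (hermite_fn \<alpha> n x),
                             b * complex_of_real (hermite_fn \<beta> m x)]))
          \<longleftrightarrow> A ** B = B ** A)
     \<and> (A ** B \<noteq> B ** A \<longrightarrow>
          (\<forall>(v0::complex^2) (v1::complex^2) (\<alpha>::real). \<alpha> > 0 \<longrightarrow>
             (\<lambda>x. complex_of_real (hermite_fn \<alpha> 0 x) *s v0
                 + complex_of_real (hermite_fn \<alpha> 1 x) *s v1) \<noteq> (\<lambda>x. 0) \<longrightarrow>
             \<not> eigenfunction_H A B
                 (\<lambda>x. complex_of_real (hermite_fn \<alpha> 0 x) *s v0
                     + complex_of_real (hermite_fn \<alpha> 1 x) *s v1)))"
proof -
  have hA: "hermitian_mat A" and hB: "hermitian_mat B" using assms unfolding pos_def_mat_def by auto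
  show ?thesis
  proof (intro conjI impI allI)
    show "(\<exists>a b :: complex. \<exists>\<alpha> \<beta> :: real. \<exists>n m :: nat.
             (a \<noteq> 0 \<or> b \<noteq> 0) \<and> \<alpha> > 0 \<and> \<beta> > 0 \<and>
             eigenfunction_H A B
               (\<lambda>x. vector [a * complex_of_real (hermite_fn \<alpha> n x),
                             b * complex_of_real (hermite_fn \<beta> m x)]))
          \<longleftrightarrow> A ** B = B ** A"
      using Part1a[OF hA hB] Part1b[OF assms] by blast
  next
    fix v0 v1 :: "complex^2" and \<alpha> :: real
    assume "A ** B \<noteq> B ** A" "\<alpha> > 0"
      "(\<lambda>x. complex_of_real (hermite_fn \<alpha> 0 x) *s v0 + complex_of_real (hermite_fn \<alpha> 1 x) *s v1) \<noteq> (\<lambda>x. 0)"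
    then show "\<not> eigenfunction_H A B (\<lambda>x. complex_of_real (hermite_fn \<alpha> 0 x) *s v0 + complex_of_real (hermite_fn \<alpha> 1 x) *s v1)"
      using Part2[OF hA hB] by blast
  qed
qed

end
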